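(* Let $n\ge 2$ and $\sigma,\tau\in S_n$. Define $\delta(\sigma,\tau)=|\{x\in\{n-1,\sigma^{-1}(n-1),\tau^{-1}(n-1)\}:\sigma(x)\neq\tau(x)\}|$ and $\delta^{\sf CT}(\sigma,\tau)=|\{x\in\{\sigma^{-1}(n-1),\tau^{-1}(n-1)\}:\sigma^{\sf CT}(x)\neq\tau^{\sf CT}(x)\}|$. Then ${\rm hd}(\sigma,\tau)-{\rm hd}(\sigma^{\sf CT},\tau^{\sf CT})=\delta(\sigma,\tau)-\delta^{\sf CT}(\sigma,\tau)$.
   Context: $S_n$ is the symmetric group on $\{0,1,\ldots,n-1\}$; ${\rm hd}(\sigma,\tau)=|\{x:\sigma(x)\neq\tau(x)\}|$. The contraction of $\sigma\in S_n$ is $\sigma^{\sf CT}\in S_{n-1}$ (on $\{0,\ldots,n-2\}$) defined by $\sigma^{\sf CT}(x)=\sigma(n-1)$ if $x=\sigma^{-1}(n-1)$ and $\sigma^{\sf CT}(x)=\sigma(x)$ otherwise (i.e. delete $n-1$ from the cycle notation of $\sigma$). In the definition of $\delta^{\sf CT}$ only those elements of $\{\sigma^{-1}(n-1),\tau^{-1}(n-1)\}$ lying in $\{0,\ldots,n-2\}$ are considered (the symbol $n-1$ is not in the domain of the contractions). *)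

theory Defs
  imports "HOL-Combinatorics.Permutations"
begin

(* Permutations of {0,...,n-1} are represented as functions nat => nat with
   sigma permutes {..<n} (identity outside). *)

definition hd_dist :: "nat \<Rightarrow> (nat \<Rightarrow> nat) \<Rightarrow> (nat \<Rightarrow> nat) \<Rightarrow> nat" where
  "hd_dist n \<sigma> \<tau> = card {x \<in> {..<n}. \<sigma> x \<noteq> \<tau> x}"

definition contraction :: "nat \<Rightarrow> (nat \<Rightarrow> nat) \<Rightarrow> (nat \<Rightarrow> nat)" where
  "contraction n \<sigma> = (\<lambda>x. if x < n - 1 then
       (if x = inv \<sigma> (n - 1) then \<sigma> (n - 1) else \<sigma> x) else x)"

definition delta :: "nat \<Rightarrow> (nat \<Rightarrow> nat) \<Rightarrow> (nat \<Rightarrow> nat) \<Rightarrow> nat" where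
  "delta n \<sigma> \<tau> = card {x \<in> {n - 1, inv \<sigma> (n - 1), inv \<tau> (n - 1)}. \<sigma> x \<noteq> \<tau> x}"

definition delta_CT :: "nat \<Rightarrow> (nat \<Rightarrow> nat) \<Rightarrow> (nat \<Rightarrow> nat) \<Rightarrow> nat" where
  "delta_CT n \<sigma> \<tau> = card {x \<in> {inv \<sigma> (n - 1), inv \<tau> (n - 1)} \<inter> {..<n - 1}.
      contraction n \<sigma> x \<noteq> contraction n \<tau> x}"

end

theory Submission
  imports Defs
begin

theorem lemma4p1:
  fixes n :: nat and \<sigma> \<tau> :: "nat \<Rightarrow> nat"
  assumes "n \<ge> 2" and "\<sigma> permutes {..<n}" and "\<tau> permutes {..<n}"
  shows "int (hd_dist n \<sigma> \<tau>) - int (hd_dist (n - 1) (contraction n \<sigma>) (contraction n \<tau>))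
         = int (delta n \<sigma> \<tau>) - int (delta_CT n \<sigma> \<tau>)"
proof -
  define a where "a = inv \<sigma> (n - 1)"
  define b where "b = inv \<tau> (n - 1)"
  define S where "S = {n - 1, a, b}"
  define D where "D = {x \<in> {..<n}. \<sigma> x \<noteq> \<tau> x}"
  define D' where "D' = {x \<in> {..<n-1}. contraction n \<sigma> x \<noteq> contraction n \<tau> x}"
  have n1: "n - 1 \<in> {..<n}" using assms(1) by simp
  have an: "a < n" unfolding a_def
    using permutes_in_image[OF permutes_inv[OF assms(2)], of "n - 1"] n1 by simp
  have bn: "b < n" unfolding b_def
    using permutes_in_image[OF permutes_inv[OF assms(3)], of "n - 1"] n1 by simp
  have fS: "finite S" by (simp add: S_def)
  have eq: "D - S = D' - S"
    unfolding D_def D'_def S_def contraction_def a_def b_def using assms(1) by (auto; linarith)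
  have fD: "finite D" "finite D'" unfolding D_def D'_def by auto
  have c1: "card D = card (D - S) + card (D \<inter> S)"
    using card_Int_Diff[OF fD(1), of S] by simp 
  have c2: "card D' = card (D' - S) + card (D' \<inter> S)"
    using card_Int_Diff[OF fD(2), of S] by simp
  have d1: "D \<inter> S = {x \<in> {n - 1, inv \<sigma> (n - 1), inv \<tau> (n - 1)}. \<sigma> x \<noteq> \<tau> x}"
    unfolding D_def S_def using an bn assms(1) a_def b_def by auto
  have d2: "D' \<inter> S = {x \<in> {inv \<sigma> (n - 1), inv \<tau> (n - 1)} \<inter> {..<n - 1}.
      contraction n \<sigma> x \<noteq> contraction n \<tau> x}"
    unfolding D'_def S_def a_def b_def by auto
  show ?thesis
    unfolding hd_dist_def delta_def delta_CT_def
    using c1 c2 eq d1 d2 unfolding D_def D'_def by simp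
qed

end
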